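(* For integers $1\le k\le n-1$, \[ l_k(n) = \tfrac12\,|\mathrm{Epi}(P_n,P_{n-k+1})|. \]
   Context: For a positive integer $m$, $P_m$ denotes the path with vertex set $[m]=\{1,\dots,m\}$ in which $i$ and $j$ are adjacent iff $|i-j|=1$; $\mathrm{Hom}(P_n,P_r)$ is the set of maps $f:[n]\to[r]$ with $|f(i)-f(i+1)|=1$ for $1\le i\le n-1$, and $\mathrm{Epi}(P_n,P_r)=\{f\in\mathrm{Hom}(P_n,P_r): f([n])=[r]\}$. An endomorphism of $P_n$ is an element of $\mathrm{Hom}(P_n,P_n)$; it induces the partition of $[n]$ whose blocks are its nonempty fibers. Let $\mathscr C(P_n)$ be the set of partitions of $[n]$ induced by endomorphisms of $P_n$, and for $1\le k\le n-1$ let $l_k(n)=|\{\rho\in\mathscr C(P_n): \rho \text{ has exactly } n-k+1 \text{ blocks}\}|$. *)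

theory Defs
  imports Complex_Main "HOL-Library.FuncSet"
begin

text \<open>Homomorphisms P_n -> P_r: maps [n] -> [r] (extensional, undefined outside [n])
  with |f(i) - f(i+1)| = 1 for 1 <= i <= n-1.\<close>
definition Hom :: "nat \<Rightarrow> nat \<Rightarrow> (nat \<Rightarrow> nat) set" where
  "Hom n r = {f \<in> {1..n} \<rightarrow>\<^sub>E {1..r}.
      \<forall>i. 1 \<le> i \<and> i \<le> n - 1 \<longrightarrow> \<bar>int (f i) - int (f (i+1))\<bar> = 1}"

definition Epi :: "nat \<Rightarrow> nat \<Rightarrow> (nat \<Rightarrow> nat) set" where
  "Epi n r = {f \<in> Hom n r. f ` {1..n} = {1..r}}"

definition induced_partition :: "nat \<Rightarrow> (nat \<Rightarrow> nat) \<Rightarrow> nat set set" where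
  "induced_partition n f = {{i \<in> {1..n}. f i = j} | j. j \<in> f ` {1..n}}"

definition C_P :: "nat \<Rightarrow> nat set set set" where
  "C_P n = induced_partition n ` Hom n n"

definition l :: "nat \<Rightarrow> nat \<Rightarrow> nat" where
  "l k n = card {\<rho> \<in> C_P n. card \<rho> = n - k + 1}"

end

theory Submission
  imports Defs
begin

lemma ip_alt: "induced_partition n f = (\<lambda>j. {i \<in> {1..n}. f i = j}) ` (f ` {1..n})"
  unfolding induced_partition_def by blast

lemma ip_card: "card (induced_partition n f) = card (f ` {1..n})"
proof -
  have "inj_on (\<lambda>j. {i \<in> {1..n}. f i = j}) (f ` {1..n})"
    unfolding inj_on_def by blast
  then show ?thesis by (simp add: ip_alt card_image)
qed

lemma ip_eq_iff:
  "induced_partition n f = induced_partition n g \<longleftrightarrow>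
   (\<forall>i\<in>{1..n}. \<forall>j\<in>{1..n}. f i = f j \<longleftrightarrow> g i = g j)"
proof
  assume eq: "induced_partition n f = induced_partition n g"
  have blk: "{x \<in> {1..n}. f x = f i} = {x \<in> {1..n}. g x = g i}" if i: "i \<in> {1..n}" for i
  proof -
    have "{x \<in> {1..n}. f x = f i} \<in> induced_partition n g"
      using eq i unfolding induced_partition_def by blast
    then obtain j where "{x \<in> {1..n}. f x = f i} = {x \<in> {1..n}. g x = j}"
      unfolding induced_partition_def by blast
    moreover have "g i = j" using calculation i by blast
    ultimately show ?thesis by simp
  qed
  show "\<forall>i\<in>{1..n}. \<forall>j\<in>{1..n}. f i = f j \<longleftrightarrow> g i = g j"
  proof (intro ballI)
    fix i j assume i: "i \<in> {1..n}" and j: "j \<in> {1..n}"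
    have "j \<in> {x \<in> {1..n}. f x = f i} \<longleftrightarrow> j \<in> {x \<in> {1..n}. g x = g i}" using blk[OF i] by simp
    then show "f i = f j \<longleftrightarrow> g i = g j" using j by auto
  qed
next
  assume R: "\<forall>i\<in>{1..n}. \<forall>j\<in>{1..n}. f i = f j \<longleftrightarrow> g i = g j"
  have blk: "{x \<in> {1..n}. f x = f i} = {x \<in> {1..n}. g x = g i}" if i: "i \<in> {1..n}" for i
    using R i by auto
  have "induced_partition n f = (\<lambda>i. {x \<in> {1..n}. f x = f i}) ` {1..n}"
    unfolding induced_partition_def by blast
  also have "\<dots> = (\<lambda>i. {x \<in> {1..n}. g x = g i}) ` {1..n}"
    using blk by (intro image_cong) auto
  also have "\<dots> = induced_partition n g"
    unfolding induced_partition_def by blast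
  finally show "induced_partition n f = induced_partition n g" .
qed

lemma perm_path:
  fixes \<sigma> :: "nat \<Rightarrow> nat"
  assumes inj: "inj_on \<sigma> {1..r}" and rng: "\<sigma> ` {1..r} \<subseteq> {1..r}"
    and st: "\<forall>a. 1 \<le> a \<and> a < r \<longrightarrow> \<bar>int (\<sigma> a) - int (\<sigma> (a+1))\<bar> = 1"
    and r: "r \<ge> 1"
  shows "(\<forall>a\<in>{1..r}. \<sigma> a = a) \<or> (\<forall>a\<in>{1..r}. \<sigma> a = r + 1 - a)"
proof (cases "r = 1")
  case True
  then show ?thesis using rng by auto
next
  case False
  then have r2: "r \<ge> 2" using r by simp
  define s where "s = int (\<sigma> 2) - int (\<sigma> 1)"
  have A: "1 \<le> a \<longrightarrow> a < r \<longrightarrow> int (\<sigma> (a+1)) - int (\<sigma> a) = s" for a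
  proof (induction a)
    case 0 then show ?case by simp
  next
    case (Suc a)
    show ?case
    proof (intro impI)
      assume a1: "1 \<le> Suc a" and a2: "Suc a < r"
      show "int (\<sigma> (Suc a + 1)) - int (\<sigma> (Suc a)) = s"
      proof (cases "a = 0")
        case True then show ?thesis by (simp add: s_def numeral_2_eq_2)
      next
        case False
        then have ih: "int (\<sigma> (a+1)) - int (\<sigma> a) = s" using Suc a2 by simp
        have d1: "\<bar>int (\<sigma> (Suc a)) - int (\<sigma> (Suc a + 1))\<bar> = 1" using st a1 a2 by simp
        have d0: "\<bar>int (\<sigma> a) - int (\<sigma> (a + 1))\<bar> = 1" using st False a2 by simp
        have ne: "\<sigma> a \<noteq> \<sigma> (a+2)"
        proof
          assume "\<sigma> a = \<sigma> (a+2)"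
          moreover have "a \<in> {1..r}" "a + 2 \<in> {1..r}" using False a2 by auto
          ultimately have "a = a + 2" using inj_onD[OF inj] by blast
          then show False by simp
        qed
        show ?thesis using ih d1 d0 ne by (auto simp: abs_if split: if_splits)
      qed
    qed
  qed
  have B: "a \<in> {1..r} \<longrightarrow> int (\<sigma> a) = int (\<sigma> 1) + s * (int a - 1)" for a
  proof (induction a)
    case 0 then show ?case by simp
  next
    case (Suc a)
    show ?case
    proof (cases "a = 0")
      case True then show ?thesis by simp
    next
      case False
      show ?thesis
      proof
        assume "Suc a \<in> {1..r}"
        then have "a \<in> {1..r}" "1 \<le> a" "a < r" using False by auto
        then show "int (\<sigma> (Suc a)) = int (\<sigma> 1) + s * (int (Suc a) - 1)"
          using Suc A[of a] by (simp add: algebra_simps)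
      qed
    qed
  qed
  have "\<bar>int (\<sigma> 1) - int (\<sigma> (1+1))\<bar> = 1" using st r2 by simp
  then have s1: "s = 1 \<or> s = -1" unfolding s_def by (simp add: abs_if numeral_2_eq_2 split: if_splits)
  have rs: "\<sigma> r \<in> {1..r}" "\<sigma> 1 \<in> {1..r}" using rng r by (auto simp: image_subset_iff)
  show ?thesis
  proof (cases "s = 1")
    case True
    have "int (\<sigma> r) = int (\<sigma> 1) + (int r - 1)" using B[of r] r True by simp
    then have "\<sigma> 1 = 1" using rs by auto
    then show ?thesis using B True by auto
  next
    case False
    then have sm: "s = -1" using s1 by simp
    have "int (\<sigma> r) = int (\<sigma> 1) - (int r - 1)" using B[of r] r sm by simp
    then have "\<sigma> 1 = r" using rs by auto
    then have "\<forall>a\<in>{1..r}. int (\<sigma> a) = int r + 1 - int a" using B sm by auto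
    then show ?thesis by auto
  qed
qed

lemma hom_step: "f \<in> Hom n m \<Longrightarrow> 1 \<le> i \<Longrightarrow> i < n \<Longrightarrow> \<bar>int (f i) - int (f (i+1))\<bar> = 1"
  unfolding Hom_def by auto

lemma hom_range: "f \<in> Hom n m \<Longrightarrow> i \<in> {1..n} \<Longrightarrow> f i \<in> {1..m}"
  unfolding Hom_def by auto

lemma ivt:
  assumes f: "f \<in> Hom n m" and i: "1 \<le> i" and ij: "i \<le> j" and jn: "j \<le> n"
  shows "min (f i) (f j) \<le> v \<Longrightarrow> v \<le> max (f i) (f j) \<Longrightarrow> \<exists>t\<in>{i..j}. f t = v"
  using ij jn
proof (induction j rule: dec_induct)
  case base
  then show ?case by auto
next
  case (step j)
  have st: "\<bar>int (f j) - int (f (j+1))\<bar> = 1" using hom_step[OF f, of j] step i by simp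
  show ?case
  proof (cases "min (f i) (f j) \<le> v \<and> v \<le> max (f i) (f j)")
    case True
    then obtain t where "t \<in> {i..j}" "f t = v" using step by auto
    then show ?thesis by (intro bexI[of _ t]) auto
  next
    case False
    then have "v = f (Suc j)" using step.prems st by (simp add: min_def max_def split: if_splits)
    then show ?thesis using step by (intro bexI[of _ "Suc j"]) auto
  qed
qed

lemma image_interval:
  assumes f: "f \<in> Hom n m" and n: "n \<ge> 1"
  shows "f ` {1..n} = {Min (f ` {1..n})..Max (f ` {1..n})}"
proof
  show "f ` {1..n} \<subseteq> {Min (f ` {1..n})..Max (f ` {1..n})}" by auto
next
  show "{Min (f ` {1..n})..Max (f ` {1..n})} \<subseteq> f ` {1..n}"
  proof
    fix v assume v: "v \<in> {Min (f ` {1..n})..Max (f ` {1..n})}"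
    have ne: "f ` {1..n} \<noteq> {}" using n by auto
    obtain p where p: "p \<in> {1..n}" "f p = Min (f ` {1..n})"
      using Min_in[OF _ ne] by auto
    obtain q where q: "q \<in> {1..n}" "f q = Max (f ` {1..n})"
      using Max_in[OF _ ne] by auto
    have fpq: "f p \<le> f q" using p q v by simp
    have h1: "min (f (min p q)) (f (max p q)) = f p" "max (f (min p q)) (f (max p q)) = f q"
      by (cases "p \<le> q"; simp add: fpq min.absorb1 min.absorb2 max.absorb1 max.absorb2)+
    have "\<exists>t\<in>{min p q..max p q}. f t = v"
      using ivt[OF f, of "min p q" "max p q" v] p q v h1 by auto
    then obtain t where t: "t \<in> {min p q..max p q}" "f t = v" by blast
    have "t \<in> {1..n}" using t(1) p(1) q(1) by (auto simp: min_def max_def split: if_splits)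
    then show "v \<in> f ` {1..n}" using t(2) by blast
  qed
qed

lemma hom_flat:
  assumes f: "f \<in> Hom n m" and n: "n \<ge> 1"
    and all: "\<forall>i. 1 \<le> i \<and> i < n \<longrightarrow> (P (f i) \<longleftrightarrow> P (f (i+1)))"
  shows "i \<in> {1..n} \<Longrightarrow> P (f i) \<longleftrightarrow> P (f 1)"
proof (induction i)
  case 0 then show ?case by simp
next
  case (Suc i)
  show ?case
  proof (cases "i = 0")
    case True then show ?thesis by simp
  next
    case False
    then show ?thesis using Suc all by auto
  qed
qed

lemma edge:
  assumes g: "g \<in> Epi n r" and a: "1 \<le> a" "a < r" and n: "n \<ge> 1"
  shows "\<exists>i. 1 \<le> i \<and> i < n \<and> ((g i = a \<and> g (i+1) = a+1) \<or> (g i = a+1 \<and> g (i+1) = a))"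
proof (rule ccontr)
  assume no: "\<not> ?thesis"
  have gh: "g \<in> Hom n r" and im: "g ` {1..n} = {1..r}" using g unfolding Epi_def by auto
  have all: "\<forall>i. 1 \<le> i \<and> i < n \<longrightarrow> (g i \<le> a \<longleftrightarrow> g (i+1) \<le> a)"
  proof (intro allI impI)
    fix i assume i: "1 \<le> i \<and> i < n"
    have "\<bar>int (g i) - int (g (i+1))\<bar> = 1" using hom_step[OF gh] i by auto
    moreover have "\<not> ((g i = a \<and> g (i+1) = a+1) \<or> (g i = a+1 \<and> g (i+1) = a))" using no i by blast
    ultimately show "g i \<le> a \<longleftrightarrow> g (i+1) \<le> a" by linarith
  qed
  obtain p where p: "p \<in> {1..n}" "g p = a" using im a by (metis atLeastAtMost_iff imageE less_imp_le)
  obtain q where q: "q \<in> {1..n}" "g q = a + 1" using im a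
    by (metis Suc_eq_plus1 Suc_leI atLeastAtMost_iff imageE le_add2 le_trans)
  have "g p \<le> a \<longleftrightarrow> g 1 \<le> a" using hom_flat[OF gh n, of "\<lambda>x. x \<le> a"] all p by blast
  moreover have "g q \<le> a \<longleftrightarrow> g 1 \<le> a" using hom_flat[OF gh n, of "\<lambda>x. x \<le> a"] all q by blast
  ultimately show False using p q by simp
qed

lemma blocks_eq:
  assumes r: "1 \<le> r" "r \<le> n"
  shows "{\<rho> \<in> C_P n. card \<rho> = r} = induced_partition n ` Epi n r"
proof
  show "{\<rho> \<in> C_P n. card \<rho> = r} \<subseteq> induced_partition n ` Epi n r"
  proof
    fix \<rho> assume "\<rho> \<in> {\<rho> \<in> C_P n. card \<rho> = r}"
    then obtain f where f: "f \<in> Hom n n" and rho: "\<rho> = induced_partition n f"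
      and cr: "card (f ` {1..n}) = r"
      unfolding C_P_def by (auto simp: ip_card)
    have n: "n \<ge> 1" using r by simp
    define a where "a = Min (f ` {1..n})"
    define b where "b = Max (f ` {1..n})"
    have iv: "f ` {1..n} = {a..b}" using image_interval[OF f n] a_def b_def by simp
    then have ba: "b + 1 - a = r" using cr by simp
    have ab: "a \<le> b" using iv n by (metis atLeastAtMost_iff atLeastatMost_empty_iff2 empty_iff image_is_empty le_refl)
    have fa: "i \<in> {1..n} \<Longrightarrow> a \<le> f i \<and> f i \<le> b" for i using iv by auto
    define g where "g = restrict (\<lambda>i. f i + 1 - a) {1..n}"
    have gH: "g \<in> Hom n r"
      unfolding Hom_def
    proof (intro CollectI conjI allI impI)
      show "g \<in> {1..n} \<rightarrow>\<^sub>E {1..r}" unfolding g_def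
      proof (rule restrict_PiE_iff[THEN iffD2], intro ballI)
        fix x assume "x \<in> {1..n}"
        then have "a \<le> f x" "f x \<le> b" using fa by auto
        then show "f x + 1 - a \<in> {1..r}" using ba by auto
      qed
    next
      fix i assume i: "1 \<le> i \<and> i \<le> n - 1"
      have "\<bar>int (f i) - int (f (i+1))\<bar> = 1" using hom_step[OF f] i n by auto
      moreover have "a \<le> f i" "a \<le> f (i+1)" using fa i n by auto
      ultimately show "\<bar>int (g i) - int (g (i + 1))\<bar> = 1" unfolding g_def using i n by auto
    qed
    have gim: "g ` {1..n} = {1..r}"
    proof
      show "g ` {1..n} \<subseteq> {1..r}" using gH unfolding Hom_def by auto
    next
      show "{1..r} \<subseteq> g ` {1..n}"
      proof
        fix y assume y: "y \<in> {1..r}"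
        then have "y + a - 1 \<in> f ` {1..n}" using iv ba by auto
        then obtain i where i: "i \<in> {1..n}" "f i = y + a - 1" by auto
        then have "g i = y" unfolding g_def using y by auto
        then show "y \<in> g ` {1..n}" using i by auto
      qed
    qed
    have "induced_partition n g = induced_partition n f"
      unfolding ip_eq_iff g_def
    proof (intro ballI)
      fix i j assume i: "i \<in> {1..n}" and j: "j \<in> {1..n}"
      have "a \<le> f i" "a \<le> f j" using fa i j by auto
      then show "(restrict (\<lambda>i. f i + 1 - a) {1..n} i = restrict (\<lambda>i. f i + 1 - a) {1..n} j) = (f i = f j)"
        using i j by auto
    qed
    then show "\<rho> \<in> induced_partition n ` Epi n r"
      using gH gim rho unfolding Epi_def by auto
  qed
next
  show "induced_partition n ` Epi n r \<subseteq> {\<rho> \<in> C_P n. card \<rho> = r}"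
  proof
    fix \<rho> assume "\<rho> \<in> induced_partition n ` Epi n r"
    then obtain g where g: "g \<in> Epi n r" and rho: "\<rho> = induced_partition n g" by auto
    have "g \<in> Hom n n" using g r unfolding Epi_def Hom_def by (auto simp: PiE_iff)
    moreover have "card \<rho> = r" using g rho by (simp add: ip_card Epi_def)
    ultimately show "\<rho> \<in> {\<rho> \<in> C_P n. card \<rho> = r}" using rho unfolding C_P_def by auto
  qed
qed

definition rf :: "nat \<Rightarrow> nat \<Rightarrow> (nat \<Rightarrow> nat) \<Rightarrow> (nat \<Rightarrow> nat)" where
  "rf n r g = restrict (\<lambda>i. r + 1 - g i) {1..n}"

lemma rf_epi:
  assumes g: "g \<in> Epi n r"
  shows "rf n r g \<in> Epi n r" "induced_partition n (rf n r g) = induced_partition n g"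
proof -
  have gh: "g \<in> Hom n r" and im: "g ` {1..n} = {1..r}" using g unfolding Epi_def by auto
  have gr: "i \<in> {1..n} \<Longrightarrow> 1 \<le> g i \<and> g i \<le> r" for i using hom_range[OF gh] by auto
  have H: "rf n r g \<in> Hom n r"
    unfolding Hom_def
  proof (intro CollectI conjI allI impI)
    show "rf n r g \<in> {1..n} \<rightarrow>\<^sub>E {1..r}" unfolding rf_def
    proof (rule restrict_PiE_iff[THEN iffD2], intro ballI)
      fix x assume "x \<in> {1..n}"
      then have "1 \<le> g x" "g x \<le> r" using gr by auto
      then show "r + 1 - g x \<in> {1..r}" by auto
    qed
  next
    fix i assume i: "1 \<le> i \<and> i \<le> n - 1"
    have "\<bar>int (g i) - int (g (i+1))\<bar> = 1" using hom_step[OF gh] i by auto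
    moreover have "g i \<le> r" "g (i+1) \<le> r" using gr i by auto
    ultimately show "\<bar>int (rf n r g i) - int (rf n r g (i + 1))\<bar> = 1" unfolding rf_def using i by auto
  qed
  have "rf n r g ` {1..n} = {1..r}"
  proof
    show "rf n r g ` {1..n} \<subseteq> {1..r}" using H unfolding Hom_def by auto
  next
    show "{1..r} \<subseteq> rf n r g ` {1..n}"
    proof
      fix y assume y: "y \<in> {1..r}"
      then have "r + 1 - y \<in> g ` {1..n}" using im by auto
      then obtain i where i: "i \<in> {1..n}" "g i = r + 1 - y" by auto
      then have "rf n r g i = y" unfolding rf_def using y by auto
      then show "y \<in> rf n r g ` {1..n}" using i by auto
    qed
  qed
  then show "rf n r g \<in> Epi n r" using H unfolding Epi_def by auto
  show "induced_partition n (rf n r g) = induced_partition n g"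
    unfolding ip_eq_iff
  proof (intro ballI)
    fix i j assume i: "i \<in> {1..n}" and j: "j \<in> {1..n}"
    have "g i \<le> r" "g j \<le> r" using gr i j by auto
    then show "(rf n r g i = rf n r g j) = (g i = g j)" unfolding rf_def using i j by auto
  qed
qed

lemma rf_ne:
  assumes g: "g \<in> Epi n r" and r: "r \<ge> 2"
  shows "rf n r g \<noteq> g"
proof
  assume eq: "rf n r g = g"
  have "1 \<in> g ` {1..n}" using g r unfolding Epi_def by auto
  then obtain p where p: "p \<in> {1..n}" "g p = 1" by auto
  have "rf n r g p = r" using p unfolding rf_def by auto
  then show False using eq p r by simp
qed

lemma fiber:
  assumes g: "g \<in> Epi n r" and h: "h \<in> Epi n r" and eq: "induced_partition n h = induced_partition n g"
    and n: "n \<ge> 1"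
  shows "h = g \<or> h = rf n r g"
proof -
  have gh: "g \<in> Hom n r" and gim: "g ` {1..n} = {1..r}" using g unfolding Epi_def by auto
  have hh: "h \<in> Hom n r" and him: "h ` {1..n} = {1..r}" using h unfolding Epi_def by auto
  have R: "\<forall>i\<in>{1..n}. \<forall>j\<in>{1..n}. h i = h j \<longleftrightarrow> g i = g j" using eq ip_eq_iff by blast
  define \<sigma> where "\<sigma> v = h (SOME i. i \<in> {1..n} \<and> g i = v)" for v
  have sg: "\<sigma> (g i) = h i" if i: "i \<in> {1..n}" for i
  proof -
    have ex: "\<exists>j. j \<in> {1..n} \<and> g j = g i" using i by blast
    have "(SOME j. j \<in> {1..n} \<and> g j = g i) \<in> {1..n} \<and> g (SOME j. j \<in> {1..n} \<and> g j = g i) = g i"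
      using someI_ex[OF ex] .
    then show ?thesis unfolding \<sigma>_def using R i by blast
  qed
  have r: "r \<ge> 1" using gim n by (metis atLeastAtMost_iff atLeastatMost_empty_iff2 empty_iff image_is_empty le_refl not_less_eq_eq Suc_le_eq)
  have rng: "\<sigma> ` {1..r} \<subseteq> {1..r}"
  proof
    fix y assume "y \<in> \<sigma> ` {1..r}"
    then obtain v where v: "v \<in> {1..r}" "y = \<sigma> v" by auto
    then obtain i where i: "i \<in> {1..n}" "g i = v" using gim by (metis imageE)
    then show "y \<in> {1..r}" using sg v him by auto
  qed
  have inj: "inj_on \<sigma> {1..r}"
  proof (rule inj_onI)
    fix v w assume v: "v \<in> {1..r}" and w: "w \<in> {1..r}" and e: "\<sigma> v = \<sigma> w"
    obtain i where i: "i \<in> {1..n}" "g i = v" using gim v by (metis imageE)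
    obtain j where j: "j \<in> {1..n}" "g j = w" using gim w by (metis imageE)
    have "h i = h j" using e sg i j by metis
    then show "v = w" using R i j by blast
  qed
  have st: "\<forall>a. 1 \<le> a \<and> a < r \<longrightarrow> \<bar>int (\<sigma> a) - int (\<sigma> (a+1))\<bar> = 1"
  proof (intro allI impI)
    fix a assume a: "1 \<le> a \<and> a < r"
    obtain i where i: "1 \<le> i" "i < n" "(g i = a \<and> g (i+1) = a+1) \<or> (g i = a+1 \<and> g (i+1) = a)"
      using edge[OF g _ _ n, of a] a by blast
    have hs: "\<bar>int (h i) - int (h (i+1))\<bar> = 1" using hom_step[OF hh i(1,2)] .
    have "\<sigma> (g i) = h i" "\<sigma> (g (i+1)) = h (i+1)" using sg i by auto
    then show "\<bar>int (\<sigma> a) - int (\<sigma> (a+1))\<bar> = 1" using i(3) hs by auto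
  qed
  have P: "(\<forall>a\<in>{1..r}. \<sigma> a = a) \<or> (\<forall>a\<in>{1..r}. \<sigma> a = r + 1 - a)"
    using perm_path[OF inj rng st r] .
  have ext_g: "i \<notin> {1..n} \<Longrightarrow> g i = undefined" for i
    using gh unfolding Hom_def PiE_def by (auto intro: extensional_arb)
  have ext_h: "i \<notin> {1..n} \<Longrightarrow> h i = undefined" for i
    using hh unfolding Hom_def PiE_def by (auto intro: extensional_arb)
  have gr: "i \<in> {1..n} \<Longrightarrow> g i \<in> {1..r}" for i using hom_range[OF gh] by auto
  show ?thesis
  proof (cases "\<forall>a\<in>{1..r}. \<sigma> a = a")
    case True
    have "h = g"
    proof
      fix i show "h i = g i"
        using True sg gr ext_g ext_h by (cases "i \<in> {1..n}") (metis, simp)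
    qed
    then show ?thesis by simp
  next
    case False
    then have T: "\<forall>a\<in>{1..r}. \<sigma> a = r + 1 - a" using P by blast
    have "h = rf n r g"
    proof
      fix i show "h i = rf n r g i"
      proof (cases "i \<in> {1..n}")
        case True then show ?thesis using T sg gr unfolding rf_def by (metis restrict_apply')
      next
        case False then show ?thesis using ext_h[OF False] unfolding rf_def restrict_def by (simp only: if_False False)
      qed
    qed
    then show ?thesis by simp
  qed
qed

lemma finite_Epi: "finite (Epi n r)"
proof (rule finite_subset)
  show "Epi n r \<subseteq> {1..n} \<rightarrow>\<^sub>E {1..r}" unfolding Epi_def Hom_def by auto
  show "finite ({1..n} \<rightarrow>\<^sub>E {1..(r::nat)})" by (intro finite_PiE) auto
qed

lemma count:
  assumes r: "r \<ge> 2" and n: "n \<ge> 1"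
  shows "card (Epi n r) = 2 * card (induced_partition n ` Epi n r)"
proof -
  let ?E = "Epi n r" and ?P = "induced_partition n ` Epi n r"
  let ?F = "\<lambda>\<rho>. {g \<in> ?E. induced_partition n g = \<rho>}"
  have U: "?E = (\<Union>\<rho>\<in>?P. ?F \<rho>)" by auto
  have fin: "finite ?P" using finite_Epi by simp
  have c2: "card (?F \<rho>) = 2" if "\<rho> \<in> ?P" for \<rho>
  proof -
    from that obtain g where g: "g \<in> ?E" "\<rho> = induced_partition n g" by blast
    have "?F \<rho> = {g, rf n r g}"
      using fiber[OF g(1) _ _ n] rf_epi[OF g(1)] g by auto
    then show ?thesis using rf_ne[OF g(1) r] by auto
  qed
  have "card ?E = (\<Sum>\<rho>\<in>?P. card (?F \<rho>))"
    by (subst U, rule card_UN_disjoint) (use fin finite_Epi in auto)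
  also have "\<dots> = (\<Sum>\<rho>\<in>?P. 2)" using c2 by simp
  finally show ?thesis by simp
qed

theorem mainTheorem8:
  fixes k n :: nat
  assumes "1 \<le> k" and "k \<le> n - 1"
  shows "real (l k n) = (1/2) * real (card (Epi n (n - k + 1)))"
proof -
  have r1: "1 \<le> n - k + 1" "n - k + 1 \<le> n" "n - k + 1 \<ge> 2" "n \<ge> 1" using assms by auto
  have "l k n = card (induced_partition n ` Epi n (n - k + 1))"
    unfolding l_def using blocks_eq[OF r1(1,2)] by simp
  moreover have "card (Epi n (n - k + 1)) = 2 * card (induced_partition n ` Epi n (n - k + 1))"
    using count[OF r1(3,4)] .
  ultimately show ?thesis by simp
qed

end
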